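(* Let $\Lambda_i\in\mathcal H_I$, $i\in[n]$ with $n\ge2$, $\mathbb P$ atomless, and $Y\ge0$ with $1<\mathbb E^{\mathbb P}(Y)<\infty$. Then for all $X\in\mathcal X$ $$\mathop{\square}_{i=1}^n\sup_{\mathbb Q\in\mathcal P(\mathbb P,0,Y)}\Lambda_i\mathrm{VaR}^{\mathbb Q}(X)=\inf_{\mathbf y_{n-1}\in\mathbb R^{n-1}}\inf\{x\in\mathbb R:\mathbb E^{\mathbb P}(Y\mathds 1_{\{X>x\}})\le\Lambda^{\mathbf y_{n-1}}(x)\},$$ where for $\mathbf y_{n-1}=(y_1,\dots,y_{n-1})$ and $y_0=0$, $\Lambda^{\mathbf y_{n-1}}(x)=\Lambda_n(x-y_{n-1})+\sum_{i=1}^{n-1}\Lambda_i(y_i-y_{i-1})$.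
   Context: $\Lambda\mathrm{VaR}^{\mathbb Q}(X)=\inf\{x\in\mathbb R:\mathbb Q(X>x)\le\Lambda(x)\}$; $\mathcal H_I$: increasing functions $\mathbb R\to(0,1)$. $\mathcal P(\mathbb P,0,Y)=\{\mathbb Q\ll\mathbb P:0\le\mathrm d\mathbb Q/\mathrm d\mathbb P\le Y\}$. Inf-convolution $\mathop{\square}_i\rho_i(X)=\inf\{\sum_i\rho_i(X_i):X_i\in\mathcal X,\sum_iX_i=X\}$, $\mathcal X$ a set of real-valued random variables containing constants, closed under sums, differences, multiplication by indicators. *)

theory Defs
  imports "HOL-Probability.Probability"
begin

definition atomless :: "'a measure \<Rightarrow> bool" where
  "atomless M \<longleftrightarrow> (\<forall>A\<in>sets M. 0 < measure M A \<longrightarrow>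
      (\<exists>B\<in>sets M. B \<subseteq> A \<and> 0 < measure M B \<and> measure M B < measure M A))"

definition H_I :: "(real \<Rightarrow> real) set" where
  "H_I = {L. mono L \<and> (\<forall>x. 0 < L x \<and> L x < 1)}"

definition LVaR :: "(real \<Rightarrow> real) \<Rightarrow> 'a measure \<Rightarrow> ('a \<Rightarrow> real) \<Rightarrow> ereal" where
  "LVaR L Q X = Inf (ereal ` {x. measure Q {\<omega>\<in>space Q. X \<omega> > x} \<le> L x})"

definition Pset :: "'a measure \<Rightarrow> ('a \<Rightarrow> real) \<Rightarrow> 'a measure set" where
  "Pset M Y = {Q. \<exists>D. D \<in> borel_measurable M \<and> (AE \<omega> in M. 0 \<le> D \<omega> \<and> D \<omega> \<le> Y \<omega>)
       \<and> integral\<^sup>L M D = 1 \<and> Q = density M (\<lambda>\<omega>. ennreal (D \<omega>))}"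

definition admissible_space :: "'a measure \<Rightarrow> ('a \<Rightarrow> real) set \<Rightarrow> bool" where
  "admissible_space M XX \<longleftrightarrow> XX \<subseteq> borel_measurable M
     \<and> (\<forall>c. (\<lambda>_. c) \<in> XX)
     \<and> (\<forall>X\<in>XX. \<forall>Z\<in>XX. (\<lambda>\<omega>. X \<omega> + Z \<omega>) \<in> XX \<and> (\<lambda>\<omega>. X \<omega> - Z \<omega>) \<in> XX)
     \<and> (\<forall>X\<in>XX. \<forall>A\<in>sets M. (\<lambda>\<omega>. indicator A \<omega> * X \<omega>) \<in> XX)"

definition infconv :: "'a measure \<Rightarrow> ('a \<Rightarrow> real) set \<Rightarrow> nat \<Rightarrow> (nat \<Rightarrow> ('a \<Rightarrow> real) \<Rightarrow> ereal)
     \<Rightarrow> ('a \<Rightarrow> real) \<Rightarrow> ereal" where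
  "infconv M XX n \<rho> X = Inf {(\<Sum>i=1..n. \<rho> i (Xs i)) | Xs.
      (\<forall>i\<in>{1..n}. Xs i \<in> XX) \<and> (\<forall>\<omega>\<in>space M. (\<Sum>i=1..n. Xs i \<omega>) = X \<omega>)}"

text \<open>Lambda^y(x), with y_0 = 0 (the value y 0 of the argument is ignored).\<close>
definition Lambda_y :: "nat \<Rightarrow> (nat \<Rightarrow> real \<Rightarrow> real) \<Rightarrow> (nat \<Rightarrow> real) \<Rightarrow> real \<Rightarrow> real" where
  "Lambda_y n L y x = (let y' = (\<lambda>i. if i = 0 then 0 else y i) in
      L n (x - y' (n - 1)) + (\<Sum>i=1..n-1. L i (y' i - y' (i - 1))))"

end

theory Submission
  imports Defs
begin

lemma measure_density_real:
  fixes f :: "'a \<Rightarrow> real"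
  assumes [measurable]: "f \<in> borel_measurable M" and nn: "AE x in M. 0 \<le> f x"
    and int: "integrable M f" and A[measurable]: "A \<in> sets M"
  shows "measure (density M (\<lambda>x. ennreal (f x))) A = integral\<^sup>L M (\<lambda>x. f x * indicator A x)"
proof -
  have i2: "integrable M (\<lambda>x. f x * indicator A x)"
    using int A by (simp add: integrable_real_mult_indicator)
  have "emeasure (density M (\<lambda>x. ennreal (f x))) A = (\<integral>\<^sup>+ x. ennreal (f x) * indicator A x \<partial>M)"
    by (simp add: emeasure_density)
  also have "\<dots> = (\<integral>\<^sup>+ x. ennreal (f x * indicator A x) \<partial>M)"
    by (intro nn_integral_cong) (auto simp: indicator_def)
  also have "\<dots> = ennreal (integral\<^sup>L M (\<lambda>x. f x * indicator A x))"
    using nn by (intro nn_integral_eq_integral i2) (auto simp: indicator_def)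
  moreover have "0 \<le> integral\<^sup>L M (\<lambda>x. f x * indicator A x)"
    by (rule integral_nonneg_AE) (use nn in \<open>auto elim!: eventually_mono simp: indicator_def\<close>)
  ultimately show ?thesis unfolding measure_def by simp
qed

lemma atomless_small_pow:
  assumes fm: "finite_measure N" and at: "atomless N" and A: "A \<in> sets N" and pos: "0 < measure N A"
  shows "\<exists>C\<in>sets N. C \<subseteq> A \<and> 0 < measure N C \<and> measure N C \<le> measure N A / 2^k"
proof (induction k)
  case 0 then show ?case using A pos by auto
next
  case (Suc k)
  then obtain C where C: "C \<in> sets N" "C \<subseteq> A" "0 < measure N C" "measure N C \<le> measure N A / 2^k" by blast
  then obtain B where B: "B \<in> sets N" "B \<subseteq> C" "0 < measure N B" "measure N B < measure N C"
    using at unfolding atomless_def by blast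
  have d: "measure N (C - B) = measure N C - measure N B"
    using B C fm by (simp add: finite_measure.finite_measure_Diff)
  show ?case
  proof (cases "measure N B \<le> measure N C / 2")
    case True
    then show ?thesis using B C by (intro bexI[of _ B]) auto
  next
    case False
    then show ?thesis using B C d A by (intro bexI[of _ "C - B"]) auto
  qed
qed

lemma atomless_small:
  assumes fm: "finite_measure N" and at: "atomless N" and A: "A \<in> sets N" and pos: "0 < measure N A"
    and e: "0 < e"
  shows "\<exists>C\<in>sets N. C \<subseteq> A \<and> 0 < measure N C \<and> measure N C < e"
proof -
  obtain k where k: "measure N A / e < 2 ^ k"
    using real_arch_pow[of 2 "measure N A / e"] by auto
  then have "measure N A / 2^k < e" using e by (simp add: field_simps)
  from atomless_small_pow[OF assms(1-4), of k] obtain C where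
    "C \<in> sets N" "C \<subseteq> A" "0 < measure N C" "measure N C \<le> measure N A / 2^k" by blast
  then show ?thesis using \<open>measure N A / 2^k < e\<close> by (intro bexI[of _ C]) auto
qed


lemma atomless_ivt:
  assumes fm: "finite_measure N" and at: "atomless N" and A: "A \<in> sets N"
    and v0: "0 \<le> v" and vA: "v \<le> measure N A"
  shows "\<exists>C\<in>sets N. C \<subseteq> A \<and> measure N C = v"
proof -
  interpret finite_measure N by (rule fm)
  define \<mu> where "\<mu> = measure N"
  define adm where "adm C D \<longleftrightarrow> D \<in> sets N \<and> D \<subseteq> A - C \<and> \<mu> C + \<mu> D \<le> v" for C D
  define s where "s C = Sup (\<mu> ` {D. adm C D})" for C
  define g where "g C = C \<union> (SOME D. adm C D \<and> s C \<le> 2 * \<mu> D)" for C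
  define Cs where "Cs k = (g ^^ k) {}" for k
  define I where "I C \<longleftrightarrow> C \<in> sets N \<and> C \<subseteq> A \<and> \<mu> C \<le> v" for C
  have bdd: "bdd_above (\<mu> ` {D. adm C D})" for C
  proof (rule bdd_aboveI2)
    fix D assume "D \<in> {D. adm C D}"
    then show "\<mu> D \<le> \<mu> A" unfolding adm_def \<mu>_def using A by (auto intro!: finite_measure_mono)
  qed
  have ex: "\<exists>D. adm C D \<and> s C \<le> 2 * \<mu> D" if "I C" for C
  proof (cases "s C \<le> 0")
    case True
    then show ?thesis using that by (intro exI[of _ "{}"]) (auto simp: adm_def I_def \<mu>_def)
  next
    case False
    have ne: "\<mu> ` {D. adm C D} \<noteq> {}" using that by (auto simp: adm_def I_def \<mu>_def)
    have "s C / 2 < Sup (\<mu> ` {D. adm C D})" using False by (simp add: s_def)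
    then obtain x where "x \<in> \<mu> ` {D. adm C D}" "s C / 2 < x"
      using less_cSup_iff[OF ne bdd] by blast
    then show ?thesis by auto
  qed
  have gprop: "I (g C) \<and> C \<subseteq> g C \<and> \<mu> (g C) = \<mu> C + \<mu> (g C - C) \<and> s C \<le> 2 * \<mu> (g C - C)
      \<and> (\<forall>D. adm C D \<longrightarrow> \<mu> D \<le> s C)" if "I C" for C
  proof -
    define D where "D = (SOME D. adm C D \<and> s C \<le> 2 * \<mu> D)"
    have D: "adm C D \<and> s C \<le> 2 * \<mu> D" unfolding D_def using someI_ex[OF ex[OF that]] .
    have gC: "g C = C \<union> D" by (simp add: g_def D_def)
    have disj: "C \<inter> D = {}" using D by (auto simp: adm_def)
    have CD: "g C - C = D" using disj gC by auto
    have m: "\<mu> (g C) = \<mu> C + \<mu> D" unfolding gC \<mu>_def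
      using D that disj by (intro finite_measure_Union) (auto simp: adm_def I_def)
    show ?thesis
      using D that m CD gC cSup_upper[OF _ bdd] by (auto simp: adm_def I_def s_def)
  qed
  have IC: "I (Cs k)" for k
  proof (induction k)
    case 0 then show ?case by (simp add: Cs_def I_def \<mu>_def v0)
  next
    case (Suc k) then show ?case using gprop[of "Cs k"] by (simp add: Cs_def)
  qed
  have inc: "incseq Cs"
    by (rule incseq_SucI) (use gprop IC in \<open>auto simp: Cs_def\<close>)
  define C where "C = (\<Union>k. Cs k)"
  have Csets: "range Cs \<subseteq> sets N" using IC by (auto simp: I_def)
  have Cin: "C \<in> sets N" "C \<subseteq> A" using IC by (auto simp: C_def I_def)
  have lim: "(\<lambda>k. \<mu> (Cs k)) \<longlonglongrightarrow> \<mu> C"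
    unfolding \<mu>_def C_def by (rule finite_Lim_measure_incseq[OF Csets inc])
  have Cv: "\<mu> C \<le> v"
    by (rule LIMSEQ_le_const2[OF lim]) (use IC in \<open>auto simp: I_def\<close>)
  have CksubC: "Cs k \<subseteq> C" for k by (auto simp: C_def)
  show ?thesis
  proof (cases "\<mu> C < v")
    case False
    then show ?thesis using Cin Cv by (intro bexI[of _ C]) (auto simp: \<mu>_def)
  next
    case True
    have "\<mu> (A - C) = \<mu> A - \<mu> C" unfolding \<mu>_def using Cin A by (simp add: finite_measure_Diff)
    then have pos: "0 < measure N (A - C)" using True vA by (simp add: \<mu>_def)
    obtain D where D: "D \<in> sets N" "D \<subseteq> A - C" "0 < \<mu> D" "\<mu> D < v - \<mu> C"
      using atomless_small[OF fm at _ pos, of "v - \<mu> C"] True A Cin by (auto simp: \<mu>_def)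
    have admk: "adm (Cs k) D" for k
    proof -
      have "\<mu> (Cs k) \<le> \<mu> C" unfolding \<mu>_def using Cin CksubC IC by (intro finite_measure_mono) auto
      then show ?thesis using D CksubC[of k] by (auto simp: adm_def)
    qed
    have step: "\<mu> (Cs k) + \<mu> D / 2 \<le> \<mu> (Cs (Suc k))" for k
    proof -
      have g: "I (g (Cs k)) \<and> Cs k \<subseteq> g (Cs k) \<and> \<mu> (g (Cs k)) = \<mu> (Cs k) + \<mu> (g (Cs k) - Cs k)
          \<and> s (Cs k) \<le> 2 * \<mu> (g (Cs k) - Cs k) \<and> (\<forall>D. adm (Cs k) D \<longrightarrow> \<mu> D \<le> s (Cs k))"
        using gprop[OF IC[of k]] .
      then have "\<mu> D \<le> s (Cs k)" using admk by blast
      then show ?thesis using g by (simp add: Cs_def)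
    qed
    have grow: "real k * (\<mu> D / 2) \<le> \<mu> (Cs k)" for k
    proof (induction k)
      case 0 then show ?case by (simp add: Cs_def \<mu>_def)
    next
      case (Suc k) then show ?case using step[of k] by (simp add: algebra_simps)
    qed
    obtain k where k: "v / (\<mu> D / 2) < real k" using reals_Archimedean2 by blast
    then have "v < real k * (\<mu> D / 2)" using D by (simp add: field_simps)
    with grow[of k] IC[of k] show ?thesis by (auto simp: I_def)
  qed
qed


lemma partition_exists:
  fixes k :: nat and c :: "nat \<Rightarrow> real"
  assumes fm: "finite_measure N" and at: "atomless N" and k: "1 \<le> k"
  shows "B \<in> sets N \<Longrightarrow> (\<forall>i\<in>{1..k}. 0 \<le> c i) \<Longrightarrow> measure N B \<le> (\<Sum>i=1..k. c i) \<Longrightarrow>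
    \<exists>P. (\<forall>i\<in>{1..k}. P i \<in> sets N \<and> measure N (P i \<inter> B) \<le> c i)
      \<and> (\<forall>i\<in>{1..k}. \<forall>j\<in>{1..k}. i \<noteq> j \<longrightarrow> P i \<inter> P j = {})
      \<and> (\<Union>i\<in>{1..k}. P i) = space N"
  using k
proof (induction k arbitrary: B rule: nat_induct_at_least)
  case base
  then show ?case by (intro exI[of _ "\<lambda>_. space N"]) (auto simp: Int_absorb1 sets.sets_into_space)
next
  case (Suc k)
  interpret finite_measure N by (rule fm)
  define a where "a = min (c (Suc k)) (measure N B)"
  have a0: "0 \<le> a" using Suc.prems by (auto simp: a_def)
  obtain A where A: "A \<in> sets N" "A \<subseteq> B" "measure N A = a"
    using atomless_ivt[OF fm at Suc.prems(1) a0] by (auto simp: a_def)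
  have mB': "measure N (B - A) = measure N B - a"
    using A Suc.prems by (simp add: finite_measure_Diff)
  have sk: "0 \<le> (\<Sum>i=1..k. c i)" using Suc.prems by (intro sum_nonneg) auto
  have "measure N (B - A) \<le> (\<Sum>i=1..k. c i)"
    using Suc.prems(3) sk unfolding mB' a_def by (auto simp: min_def)
  then obtain P where P: "\<forall>i\<in>{1..k}. P i \<in> sets N \<and> measure N (P i \<inter> (B - A)) \<le> c i"
      "\<forall>i\<in>{1..k}. \<forall>j\<in>{1..k}. i \<noteq> j \<longrightarrow> P i \<inter> P j = {}"
      "(\<Union>i\<in>{1..k}. P i) = space N"
    using Suc.IH[of "B - A"] Suc.prems A by auto
  define P' where "P' i = (if i = Suc k then A else P i - A)" for i
  have Asp: "A \<subseteq> space N" using A sets.sets_into_space by auto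
  have "\<forall>i\<in>{1..Suc k}. P' i \<in> sets N \<and> measure N (P' i \<inter> B) \<le> c i"
  proof
    fix i assume i: "i \<in> {1..Suc k}"
    show "P' i \<in> sets N \<and> measure N (P' i \<inter> B) \<le> c i"
    proof (cases "i = Suc k")
      case True
      then show ?thesis using A by (auto simp: P'_def Int_absorb2 a_def)
    next
      case False
      then have i': "i \<in> {1..k}" using i by auto
      have "(P i - A) \<inter> B = P i \<inter> (B - A)" by auto
      then show ?thesis using P(1) i' False A by (auto simp: P'_def)
    qed
  qed
  moreover have "\<forall>i\<in>{1..Suc k}. \<forall>j\<in>{1..Suc k}. i \<noteq> j \<longrightarrow> P' i \<inter> P' j = {}"
  proof (intro ballI impI)
    fix i j assume ij: "i \<in> {1..Suc k}" "j \<in> {1..Suc k}" "i \<noteq> j"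
    show "P' i \<inter> P' j = {}"
    proof (cases "i = Suc k \<or> j = Suc k")
      case True then show ?thesis using ij(3) by (auto simp: P'_def)
    next
      case False
      then have "i \<in> {1..k}" "j \<in> {1..k}" using ij by auto
      then have "P i \<inter> P j = {}" using P(2) ij(3) by blast
      then show ?thesis using False by (auto simp: P'_def)
    qed
  qed
  moreover have "(\<Union>i\<in>{1..Suc k}. P' i) = space N"
  proof -
    have "{1..Suc k} = insert (Suc k) {1..k}" by auto
    then have "(\<Union>i\<in>{1..Suc k}. P' i) = A \<union> (\<Union>i\<in>{1..k}. P i - A)" by (auto simp: P'_def)
    also have "\<dots> = A \<union> space N" using P(3) by blast
    finally show ?thesis using Asp by blast
  qed
  ultimately show ?case by blast
qed

lemma density_finite_atomless:
  fixes Y :: "'a \<Rightarrow> real"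
  assumes fM: "finite_measure M" and at: "atomless M" and Ym[measurable]: "Y \<in> borel_measurable M"
    and Y0: "\<forall>\<omega>\<in>space M. 0 \<le> Y \<omega>" and Yi: "integrable M Y"
  shows "finite_measure (density M (\<lambda>x. ennreal (Y x)))" "atomless (density M (\<lambda>x. ennreal (Y x)))"
proof -
  define N where "N = density M (\<lambda>x. ennreal (Y x))"
  interpret M: finite_measure M by (rule fM)
  have "emeasure N (space N) = (\<integral>\<^sup>+ x. ennreal (Y x) * indicator (space M) x \<partial>M)"
    by (simp add: N_def emeasure_density)
  also have "\<dots> = (\<integral>\<^sup>+ x. ennreal (Y x) \<partial>M)"
    by (intro nn_integral_cong) auto
  also have "\<dots> = (\<integral>\<^sup>+ x. ennreal (norm (Y x)) \<partial>M)"
    using Y0 by (intro nn_integral_cong) auto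
  also have "\<dots> < \<infinity>" using Yi by (simp add: integrable_iff_bounded)
  finally have fN: "finite_measure N" by (intro finite_measureI) auto
  then show "finite_measure (density M (\<lambda>x. ennreal (Y x)))" by (simp add: N_def)
  interpret N: finite_measure N by (rule fN)
  have sN[simp]: "sets N = sets M" "space N = space M" by (auto simp: N_def)
  define Pp where "Pp = {x\<in>space M. 0 < Y x}"
  have Pp[measurable]: "Pp \<in> sets M" unfolding Pp_def by measurable
  have PpY: "\<And>x. x \<in> Pp \<Longrightarrow> 0 < Y x" by (simp add: Pp_def)
  have null: "S - Pp \<in> null_sets N" if "S \<in> sets M" for S
    unfolding N_def using that Y0
    by (subst null_sets_density_iff) (auto simp: Pp_def intro!: AE_I2)
  have eqP: "measure N S = measure N (S \<inter> Pp)" if "S \<in> sets M" for S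
  proof -
    have "S \<inter> Pp = S - (S - Pp)" by auto
    then show ?thesis using measure_Diff_null_set[of "S" N "S - Pp"] null[OF that] that
      by simp
  qed
  have zero: "measure N S = 0 \<longleftrightarrow> measure M S = 0" if "S \<in> sets M" "S \<subseteq> Pp" for S
  proof -
    have "measure N S = 0 \<longleftrightarrow> S \<in> null_sets N"
      using that by (simp add: N.emeasure_eq_measure null_sets_def)
    also have "\<dots> \<longleftrightarrow> (AE x in M. x \<in> S \<longrightarrow> ennreal (Y x) = 0)"
      unfolding N_def using that by (simp add: null_sets_density_iff)
    also have "\<dots> \<longleftrightarrow> (AE x in M. x \<notin> S)"
    proof (rule AE_cong)
      fix x assume x: "x \<in> space M"
      show "(x \<in> S \<longrightarrow> ennreal (Y x) = 0) \<longleftrightarrow> x \<notin> S"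
      proof (cases "x \<in> S")
        case True
        then have "0 < Y x" using that(2) PpY by blast
        then have "ennreal (Y x) \<noteq> 0" using ennreal_eq_0_iff not_le by blast
        then show ?thesis using True by blast
      next
        case False then show ?thesis by simp
      qed
    qed
    also have "\<dots> \<longleftrightarrow> S \<in> null_sets M"
      using that by (simp add: AE_iff_null_sets)
    also have "\<dots> \<longleftrightarrow> measure M S = 0"
      using that by (simp add: M.emeasure_eq_measure null_sets_def)
    finally show ?thesis .
  qed
  have "atomless N" unfolding atomless_def
  proof (intro ballI impI)
    fix A assume A: "A \<in> sets N" "0 < measure N A"
    define A' where "A' = A \<inter> Pp"
    have A'm: "A' \<in> sets M" using A by (simp add: A'_def)
    have AM: "A \<in> sets M" using A by simp
    have eA: "measure N A = measure N A'" unfolding A'_def by (rule eqP[OF AM])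
    have A'P: "A' \<subseteq> Pp" "A' \<subseteq> A" by (auto simp: A'_def)
    have "measure N A' \<noteq> 0" using A(2) eA by linarith
    then have "measure M A' \<noteq> 0" using zero[OF A'm A'P(1)] by blast
    then have "0 < measure M A'" using measure_nonneg[of M A'] by linarith
    then obtain B where B: "B \<in> sets M" "B \<subseteq> A'" "0 < measure M B" "measure M B < measure M A'"
      using at A'm unfolding atomless_def by blast
    have "measure M (A' - B) = measure M A' - measure M B"
      using B A'm by (simp add: M.finite_measure_Diff)
    then have "measure M (A' - B) \<noteq> 0" using B by linarith
    moreover have "A' - B \<in> sets M" "A' - B \<subseteq> Pp" using A'm B A'P by auto
    ultimately have p1: "measure N (A' - B) \<noteq> 0" using zero by blast
    have "B \<subseteq> Pp" using B A'P by blast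
    then have p2: "measure N B \<noteq> 0" using zero[OF B(1)] B(3) by auto
    have "measure N (A' - B) = measure N A' - measure N B"
      using B A'm by (simp add: N.finite_measure_Diff)
    then have lt: "measure N B < measure N A"
      using p1 eA measure_nonneg[of N "A' - B"] by linarith
    have "0 < measure N B" using p2 measure_nonneg[of N B] by linarith
    then show "\<exists>B\<in>sets N. B \<subseteq> A \<and> 0 < measure N B \<and> measure N B < measure N A"
      using B A'P lt by (intro bexI[of _ B]) auto
  qed
  then show "atomless (density M (\<lambda>x. ennreal (Y x)))" by (simp add: N_def)
qed


lemma R_finite:
  fixes N :: "'a measure" and Lf :: "real \<Rightarrow> real" and Z :: "'a \<Rightarrow> real"
  assumes fm: "finite_measure N" and LH: "Lf \<in> H_I" and Zm[measurable]: "Z \<in> borel_measurable N"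
    and big: "1 < measure N (space N)"
  shows "\<exists>r. Inf (ereal ` {x. measure N {\<omega>\<in>space N. Z \<omega> > x} \<le> Lf x}) = ereal r
    \<and> (\<forall>x. r < x \<longrightarrow> measure N {\<omega>\<in>space N. Z \<omega> > x} \<le> Lf x)"
proof -
  interpret finite_measure N by (rule fm)
  define F where "F x = measure N {\<omega>\<in>space N. Z \<omega> > x}" for x
  define S where "S = {x. F x \<le> Lf x}"
  have Lmono: "mono Lf" and Lpos: "\<And>x. 0 < Lf x" and L1: "\<And>x. Lf x < 1"
    using LH by (auto simp: H_I_def)
  have Fanti: "F x' \<le> F x" if "x \<le> x'" for x x'
    unfolding F_def using that by (intro finite_measure_mono) auto
  have up: "x' \<in> S" if "x \<in> S" "x \<le> x'" for x x'
  proof -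
    have "F x' \<le> F x" using Fanti that(2) .
    also have "\<dots> \<le> Lf x" using that(1) by (simp add: S_def)
    also have "\<dots> \<le> Lf x'" using Lmono that(2) by (simp add: mono_def)
    finally show ?thesis by (simp add: S_def)
  qed
  have lim1: "(\<lambda>n. F (real n)) \<longlonglongrightarrow> 0"
  proof -
    have "(\<lambda>n. measure N {\<omega>\<in>space N. Z \<omega> > real n}) \<longlonglongrightarrow> measure N (\<Inter>n. {\<omega>\<in>space N. Z \<omega> > real n})"
      by (rule finite_Lim_measure_decseq) (auto simp: decseq_def)
    moreover have "(\<Inter>n. {\<omega>\<in>space N. Z \<omega> > real n}) = {}"
    proof -
      have "\<not> (\<forall>n. Z \<omega> > real n)" for \<omega>
        using reals_Archimedean2[of "Z \<omega>"] by (auto simp: not_less intro: less_imp_le)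
      then show ?thesis by auto
    qed
    ultimately show ?thesis by (simp add: F_def)
  qed
  obtain n1 where n1: "F (real n1) < Lf 0"
    using order_tendstoD(2)[OF lim1 Lpos[of 0]] by (auto simp: eventually_sequentially)
  have "Lf 0 \<le> Lf (real n1)" using Lmono by (simp add: mono_def)
  then have ne: "real n1 \<in> S" using n1 by (simp add: S_def)
  have lim2: "(\<lambda>n. F (- real n)) \<longlonglongrightarrow> measure N (space N)"
  proof -
    have "(\<lambda>n. measure N {\<omega>\<in>space N. Z \<omega> > - real n}) \<longlonglongrightarrow> measure N (\<Union>n. {\<omega>\<in>space N. Z \<omega> > - real n})"
      by (rule finite_Lim_measure_incseq) (auto simp: incseq_def)
    moreover have "(\<Union>n. {\<omega>\<in>space N. Z \<omega> > - real n}) = space N"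
    proof -
      have "\<exists>n. Z \<omega> > - real n" for \<omega>
      proof -
        obtain n where "- Z \<omega> < real n" using reals_Archimedean2[of "- Z \<omega>"] by auto
        then have "- real n < Z \<omega>" by linarith
        then show ?thesis by blast
      qed
      then show ?thesis by auto
    qed
    ultimately show ?thesis by (simp add: F_def)
  qed
  obtain n2 where n2: "1 < F (- real n2)"
    using order_tendstoD(1)[OF lim2 big] by (auto simp: eventually_sequentially)
  have lb: "- real n2 < x" if "x \<in> S" for x
  proof (rule ccontr)
    assume "\<not> - real n2 < x"
    then have "F (- real n2) \<le> F x" using Fanti by simp
    moreover have "F x \<le> Lf x" using that by (simp add: S_def)
    ultimately show False using n2 L1[of x] by linarith
  qed
  have bdd: "bdd_below S" using lb by (intro bdd_belowI[of _ "- real n2"]) (auto intro: less_imp_le)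
  have Sne: "S \<noteq> {}" using ne by auto
  have e: "Inf (ereal ` S) = ereal (Inf S)" using ereal_Inf'[OF bdd Sne] by simp
  have "\<forall>x. Inf S < x \<longrightarrow> x \<in> S"
  proof (intro allI impI)
    fix x assume "Inf S < x"
    then obtain s where "s \<in> S" "s < x" using cInf_less_iff[OF Sne bdd] by auto
    then show "x \<in> S" using up by auto
  qed
  then show ?thesis using e unfolding S_def F_def by auto
qed


lemma sup_LVaR:
  fixes M :: "'a measure" and Y Z :: "'a \<Rightarrow> real" and Lf :: "real \<Rightarrow> real"
  assumes PM: "prob_space M" and Ym[measurable]: "Y \<in> borel_measurable M"
    and Y0: "\<forall>\<omega>\<in>space M. 0 \<le> Y \<omega>" and Yi: "integrable M Y" and big: "1 < integral\<^sup>L M Y"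
    and LH: "Lf \<in> H_I" and Zm[measurable]: "Z \<in> borel_measurable M"
  shows "(SUP Q\<in>Pset M Y. LVaR Lf Q Z)
     = Inf (ereal ` {x. integral\<^sup>L M (\<lambda>\<omega>. Y \<omega> * indicator {\<omega>\<in>space M. Z \<omega> > x} \<omega>) \<le> Lf x})"
proof -
  define nu where "nu S = integral\<^sup>L M (\<lambda>\<omega>. Y \<omega> * indicator S \<omega>)" for S
  define SN where "SN = {x. nu {\<omega>\<in>space M. Z \<omega> > x} \<le> Lf x}"
  have Lmono: "mono Lf" and Lpos: "\<And>x. 0 < Lf x" and L1: "\<And>x. Lf x < 1"
    using LH by (auto simp: H_I_def)
  have QB: "measure Q S \<le> nu S" and QE: "measure Q S = integral\<^sup>L M (\<lambda>\<omega>. D \<omega> * indicator S \<omega>)"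
    if "Q = density M (\<lambda>\<omega>. ennreal (D \<omega>))" "D \<in> borel_measurable M"
       "AE \<omega> in M. 0 \<le> D \<omega> \<and> D \<omega> \<le> Y \<omega>" "S \<in> sets M" for Q D S
  proof -
    have Di: "integrable M D"
      by (rule Bochner_Integration.integrable_bound[OF Yi that(2)]) (use that(3) in \<open>eventually_elim, auto\<close>)
    show e: "measure Q S = integral\<^sup>L M (\<lambda>\<omega>. D \<omega> * indicator S \<omega>)"
      unfolding that(1) by (rule measure_density_real[OF that(2) _ Di that(4)]) (use that(3) in \<open>auto elim!: eventually_mono\<close>)
    have "integral\<^sup>L M (\<lambda>\<omega>. D \<omega> * indicator S \<omega>) \<le> nu S"
      unfolding nu_def
    proof (rule integral_mono_AE)
      show "integrable M (\<lambda>\<omega>. D \<omega> * indicator S \<omega>)" using that(4) Di by (rule integrable_real_mult_indicator)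
      show "integrable M (\<lambda>\<omega>. Y \<omega> * indicator S \<omega>)" using that(4) Yi by (rule integrable_real_mult_indicator)
      show "AE \<omega> in M. D \<omega> * indicator S \<omega> \<le> Y \<omega> * indicator S \<omega>"
        using that(3) by eventually_elim (auto simp: indicator_def)
    qed
    then show "measure Q S \<le> nu S" using e by simp
  qed
  have "(SUP Q\<in>Pset M Y. LVaR Lf Q Z) = Inf (ereal ` SN)"
  proof (rule antisym)
    show "(SUP Q\<in>Pset M Y. LVaR Lf Q Z) \<le> Inf (ereal ` SN)"
    proof (rule SUP_least)
      fix Q assume "Q \<in> Pset M Y"
      then obtain D where D: "D \<in> borel_measurable M" "AE \<omega> in M. 0 \<le> D \<omega> \<and> D \<omega> \<le> Y \<omega>"
        "Q = density M (\<lambda>\<omega>. ennreal (D \<omega>))" by (auto simp: Pset_def)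
      have sQ: "space Q = space M" using D by simp
      have "ereal ` {x. nu {\<omega>\<in>space M. Z \<omega> > x} \<le> Lf x} \<subseteq> ereal ` {x. measure Q {\<omega>\<in>space Q. Z \<omega> > x} \<le> Lf x}"
      proof (intro image_mono subsetI)
        fix x assume "x \<in> {x. nu {\<omega>\<in>space M. Z \<omega> > x} \<le> Lf x}"
        moreover have "measure Q {\<omega>\<in>space M. Z \<omega> > x} \<le> nu {\<omega>\<in>space M. Z \<omega> > x}"
          by (rule QB[OF D(3) D(1) D(2)]) measurable
        ultimately show "x \<in> {x. measure Q {\<omega>\<in>space Q. Z \<omega> > x} \<le> Lf x}" using sQ by auto
      qed
      then show "LVaR Lf Q Z \<le> Inf (ereal ` SN)"
        unfolding LVaR_def SN_def by (rule Inf_superset_mono)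
    qed
  next
    show "Inf (ereal ` SN) \<le> (SUP Q\<in>Pset M Y. LVaR Lf Q Z)"
    proof (rule dense_le)
      fix y assume y: "y < Inf (ereal ` SN)"
      show "y \<le> (SUP Q\<in>Pset M Y. LVaR Lf Q Z)"
      proof (cases y)
        case MInf then show ?thesis by simp
      next
        case PInf then show ?thesis using y by simp
      next
        case (real t)
        define B where "B = {\<omega>\<in>space M. Z \<omega> > t}"
        have Bm[measurable]: "B \<in> sets M" unfolding B_def by measurable
        define a where "a = nu B"
        define m where "m = integral\<^sup>L M Y"
        have "t \<notin> SN"
        proof
          assume "t \<in> SN"
          then have "Inf (ereal ` SN) \<le> ereal t" by (intro Inf_lower) auto
          then show False using y real by simp
        qed
        then have aL: "Lf t < a" by (simp add: SN_def a_def B_def)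
        have iB: "integrable M (\<lambda>\<omega>. Y \<omega> * indicator B \<omega>)" by (simp add: integrable_real_mult_indicator Yi)
        have iC: "integrable M (\<lambda>\<omega>. Y \<omega> * indicator (space M - B) \<omega>)"
          by (simp add: integrable_real_mult_indicator Yi)
        have mC: "integral\<^sup>L M (\<lambda>\<omega>. Y \<omega> * indicator (space M - B) \<omega>) = m - a"
        proof -
          have "integral\<^sup>L M (\<lambda>\<omega>. Y \<omega> * indicator (space M - B) \<omega>) = integral\<^sup>L M (\<lambda>\<omega>. Y \<omega> - Y \<omega> * indicator B \<omega>)"
            by (rule Bochner_Integration.integral_cong[OF refl]) (auto simp: indicator_def B_def)
          also have "\<dots> = m - a" unfolding m_def a_def nu_def
            by (rule Bochner_Integration.integral_diff[OF Yi iB])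
          finally show ?thesis .
        qed
        have "\<exists>\<alpha> \<beta>. 0 \<le> \<alpha> \<and> \<alpha> \<le> 1 \<and> 0 \<le> \<beta> \<and> \<beta> \<le> 1 \<and> \<alpha> * a + \<beta> * (m - a) = 1 \<and> Lf t < \<alpha> * a"
        proof (cases "1 \<le> a")
          case True
          then show ?thesis using L1[of t] by (intro exI[of _ "1/a"] exI[of _ 0]) auto
        next
          case False
          have "m - a > 0" using False big by (simp add: m_def)
          then show ?thesis using False aL Lpos[of t] big
            by (intro exI[of _ 1] exI[of _ "(1 - a) / (m - a)"]) (auto simp: field_simps m_def)
        qed
        then obtain \<alpha> \<beta> where ab: "0 \<le> \<alpha>" "\<alpha> \<le> 1" "0 \<le> \<beta>" "\<beta> \<le> 1" "\<alpha> * a + \<beta> * (m - a) = 1" "Lf t < \<alpha> * a"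
          by blast
        define D where "D \<omega> = \<alpha> * (Y \<omega> * indicator B \<omega>) + \<beta> * (Y \<omega> * indicator (space M - B) \<omega>)" for \<omega>
        have Dm[measurable]: "D \<in> borel_measurable M" unfolding D_def by measurable
        have Dbd: "0 \<le> D \<omega> \<and> D \<omega> \<le> Y \<omega>" if "\<omega> \<in> space M" for \<omega>
        proof (cases "\<omega> \<in> B")
          case True
          then show ?thesis using ab Y0 that by (auto simp: D_def intro: mult_left_le_one_le)
        next
          case False
          then show ?thesis using ab Y0 that by (auto simp: D_def intro: mult_left_le_one_le)
        qed
        have DAE: "AE \<omega> in M. 0 \<le> D \<omega> \<and> D \<omega> \<le> Y \<omega>" using Dbd by (intro AE_I2) auto
        have Dint: "integral\<^sup>L M D = 1"
        proof -
          have "integral\<^sup>L M D = \<alpha> * a + \<beta> * (m - a)"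
            unfolding D_def using iB iC mC by (simp add: a_def nu_def)
          then show ?thesis using ab by simp
        qed
        define Q where "Q = density M (\<lambda>\<omega>. ennreal (D \<omega>))"
        have QP: "Q \<in> Pset M Y" unfolding Pset_def Q_def using Dm DAE Dint by blast
        have QBv: "measure Q B = \<alpha> * a"
        proof -
          have "measure Q B = integral\<^sup>L M (\<lambda>\<omega>. D \<omega> * indicator B \<omega>)"
            by (rule QE[OF Q_def Dm DAE Bm])
          also have "\<dots> = integral\<^sup>L M (\<lambda>\<omega>. \<alpha> * (Y \<omega> * indicator B \<omega>))"
            by (rule Bochner_Integration.integral_cong[OF refl]) (auto simp: D_def indicator_def)
          also have "\<dots> = \<alpha> * a" by (simp add: a_def nu_def)
          finally show ?thesis .
        qed
        have "ereal t \<le> LVaR Lf Q Z"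
          unfolding LVaR_def
        proof (rule Inf_greatest)
          fix z assume "z \<in> ereal ` {x. measure Q {\<omega>\<in>space Q. Z \<omega> > x} \<le> Lf x}"
          then obtain x where x: "z = ereal x" "measure Q {\<omega>\<in>space Q. Z \<omega> > x} \<le> Lf x" by auto
          have sQ: "space Q = space M" by (simp add: Q_def)
          show "ereal t \<le> z"
          proof (rule ccontr)
            assume "\<not> ereal t \<le> z"
            then have xt: "x < t" using x by simp
            have Xm: "{\<omega>\<in>space M. Z \<omega> > x} \<in> sets M" by measurable
            have "measure Q B = integral\<^sup>L M (\<lambda>\<omega>. D \<omega> * indicator B \<omega>)"
              by (rule QE[OF Q_def Dm DAE Bm])
            also have "\<dots> \<le> integral\<^sup>L M (\<lambda>\<omega>. D \<omega> * indicator {\<omega>\<in>space M. Z \<omega> > x} \<omega>)"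
            proof (rule Bochner_Integration.integral_mono)
              have Di: "integrable M D"
                by (rule Bochner_Integration.integrable_bound[OF Yi Dm]) (use Dbd Y0 in \<open>auto intro!: AE_I2\<close>)
              show "integrable M (\<lambda>\<omega>. D \<omega> * indicator B \<omega>)" by (simp add: integrable_real_mult_indicator Di)
              show "integrable M (\<lambda>\<omega>. D \<omega> * indicator {\<omega>\<in>space M. Z \<omega> > x} \<omega>)"
                using Xm by (simp add: integrable_real_mult_indicator Di)
              fix \<omega> assume "\<omega> \<in> space M"
              then show "D \<omega> * indicator B \<omega> \<le> D \<omega> * indicator {\<omega>\<in>space M. Z \<omega> > x} \<omega>"
                using Dbd[of \<omega>] xt by (auto simp: indicator_def B_def)
            qed
            also have "\<dots> = measure Q {\<omega>\<in>space M. Z \<omega> > x}"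
              by (rule QE[OF Q_def Dm DAE Xm, symmetric])
            finally have "\<alpha> * a \<le> Lf x" using x(2) QBv sQ by simp
            moreover have "Lf x \<le> Lf t" using Lmono xt by (simp add: mono_def)
            ultimately show False using ab(6) by simp
          qed
        qed
        also have "\<dots> \<le> (SUP Q\<in>Pset M Y. LVaR Lf Q Z)" using QP by (rule SUP_upper)
        finally show ?thesis using real by simp
      qed
    qed
  qed
  then show ?thesis by (simp add: SN_def nu_def)
qed


lemma sum_split_last:
  fixes f :: "nat \<Rightarrow> 'b::comm_monoid_add"
  assumes "1 \<le> n"
  shows "(\<Sum>i=1..n. f i) = (\<Sum>i=1..n-1. f i) + f n"
proof -
  obtain m where m: "n = Suc m" using assms by (cases n) auto
  show ?thesis unfolding m by (simp add: sum.cl_ivl_Suc add.commute)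
qed

lemma tele:
  fixes f :: "nat \<Rightarrow> real"
  shows "(\<Sum>i=1..m. (f i - f (i - 1))) = f m - f 0"
proof (induction m)
  case 0 then show ?case by simp
next
  case (Suc m) then show ?case by (simp add: sum.cl_ivl_Suc)
qed

lemma Lambda_y_sum:
  fixes xx :: "nat \<Rightarrow> real"
  assumes n: "1 \<le> n"
  shows "Lambda_y n L (\<lambda>k. \<Sum>i=1..k. xx i) (\<Sum>i=1..n. xx i) = (\<Sum>i=1..n. L i (xx i))"
proof -
  define yy where "yy = (\<lambda>k. \<Sum>i=1..k. xx i)"
  have y': "(\<lambda>i. if i = 0 then 0 else yy i) = yy" by (auto simp: yy_def)
  have d: "yy i - yy (i - 1) = xx i" if "1 \<le> i" for i
    using sum_split_last[OF that, of xx] by (simp add: yy_def)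
  have "Lambda_y n L yy (yy n) = L n (yy n - yy (n - 1)) + (\<Sum>i=1..n-1. L i (yy i - yy (i - 1)))"
    unfolding Lambda_y_def Let_def y' by simp
  also have "\<dots> = L n (xx n) + (\<Sum>i=1..n-1. L i (xx i))"
    using d n by (intro arg_cong2[where f="(+)"] sum.cong) auto
  also have "\<dots> = (\<Sum>i=1..n. L i (xx i))"
    using sum_split_last[OF n, of "\<lambda>i. L i (xx i)"] by simp
  finally show ?thesis unfolding yy_def by simp
qed

lemma Lambda_y_split:
  fixes y :: "nat \<Rightarrow> real" and x :: real
  assumes n: "1 \<le> n"
  defines "y' \<equiv> (\<lambda>i. if i = 0 then 0 else y i)"
  defines "xx \<equiv> (\<lambda>i. if i < n then y' i - y' (i - 1) else x - y' (n - 1))"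
  shows "(\<Sum>i=1..n. xx i) = x" "(\<Sum>i=1..n. L i (xx i)) = Lambda_y n L y x"
proof -
  have c: "(\<Sum>i=1..n-1. g (xx i)) = (\<Sum>i=1..n-1. g (y' i - y' (i - 1)))" for g :: "real \<Rightarrow> real"
    by (intro sum.cong) (auto simp: xx_def)
  have c2: "(\<Sum>i=1..n-1. L i (xx i)) = (\<Sum>i=1..n-1. L i (y' i - y' (i - 1)))"
    by (intro sum.cong) (auto simp: xx_def)
  have "(\<Sum>i=1..n. xx i) = (\<Sum>i=1..n-1. xx i) + xx n" by (rule sum_split_last[OF n])
  also have "\<dots> = (y' (n-1) - y' 0) + (x - y' (n - 1))"
    using c[of "\<lambda>t. t"] tele[of y' "n-1"] by (simp add: xx_def)
  also have "\<dots> = x" by (simp add: y'_def)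
  finally show "(\<Sum>i=1..n. xx i) = x" .
  have "(\<Sum>i=1..n. L i (xx i)) = (\<Sum>i=1..n-1. L i (xx i)) + L n (xx n)" by (rule sum_split_last[OF n])
  also have "\<dots> = (\<Sum>i=1..n-1. L i (y' i - y' (i - 1))) + L n (x - y' (n - 1))"
    unfolding c2 by (simp add: xx_def)
  also have "\<dots> = Lambda_y n L y x"
    unfolding Lambda_y_def Let_def y'_def[symmetric] by simp
  finally show "(\<Sum>i=1..n. L i (xx i)) = Lambda_y n L y x" .
qed

lemma indicator_partition_sum:
  assumes fin: "finite I" and disj: "\<forall>i\<in>I. \<forall>j\<in>I. i \<noteq> j \<longrightarrow> P i \<inter> P j = {}"
    and w: "\<omega> \<in> (\<Union>i\<in>I. P i)"
  shows "(\<Sum>i\<in>I. indicator (P i) \<omega> :: real) = 1"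
proof -
  obtain j where j: "j \<in> I" "\<omega> \<in> P j" using w by auto
  have "(\<Sum>i\<in>I. indicator (P i) \<omega> :: real) = (\<Sum>i\<in>I. if i = j then 1 else 0)"
  proof (rule sum.cong)
    fix i assume "i \<in> I"
    then show "indicator (P i) \<omega> = (if i = j then 1 else (0::real))"
      using disj j by (cases "i = j") (auto simp: indicator_def)
  qed simp
  also have "\<dots> = 1" using fin j by simp
  finally show ?thesis .
qed


theorem mainTheorem17:
  fixes M :: "'a measure" and L :: "nat \<Rightarrow> real \<Rightarrow> real" and n :: nat
    and Y :: "'a \<Rightarrow> real" and XX :: "('a \<Rightarrow> real) set" and X :: "'a \<Rightarrow> real"
  assumes "prob_space M" and "atomless M"
    and "n \<ge> 2" and "\<forall>i\<in>{1..n}. L i \<in> H_I"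
    and "Y \<in> borel_measurable M" and "\<forall>\<omega>\<in>space M. 0 \<le> Y \<omega>"
    and "integrable M Y" and "1 < integral\<^sup>L M Y"
    and "admissible_space M XX" and "X \<in> XX"
  shows "infconv M XX n (\<lambda>i Z. SUP Q\<in>Pset M Y. LVaR (L i) Q Z) X
       = (INF y\<in>(UNIV :: (nat \<Rightarrow> real) set).
            Inf (ereal ` {x. integral\<^sup>L M (\<lambda>\<omega>. Y \<omega> * indicator {\<omega>\<in>space M. X \<omega> > x} \<omega>)
                               \<le> Lambda_y n L y x}))"
proof -
  have PM: "prob_space M" and atM: "atomless M" and n2: "n \<ge> 2" and LH: "\<forall>i\<in>{1..n}. L i \<in> H_I"
    and Ym[measurable]: "Y \<in> borel_measurable M" and Y0: "\<forall>\<omega>\<in>space M. 0 \<le> Y \<omega>"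
    and Yi: "integrable M Y" and big: "1 < integral\<^sup>L M Y"
    and adm: "admissible_space M XX" and XXX: "X \<in> XX" using assms by auto
  have n1: "1 \<le> n" using n2 by simp
  have fM: "finite_measure M" using PM unfolding prob_space_def by blast
  define N where "N = density M (\<lambda>x. ennreal (Y x))"
  have fN: "finite_measure N" and aN: "atomless N"
    using density_finite_atomless[OF fM atM Ym Y0 Yi] by (simp_all add: N_def)
  have sN[simp]: "sets N = sets M" and spN[simp]: "space N = space M" by (simp_all add: N_def)
  have nuI: "measure N S = integral\<^sup>L M (\<lambda>\<omega>. Y \<omega> * indicator S \<omega>)" if "S \<in> sets M" for S
    unfolding N_def by (rule measure_density_real[OF Ym _ Yi that]) (use Y0 in \<open>auto intro!: AE_I2\<close>)
  have bigN: "1 < measure N (space N)"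
  proof -
    have "measure N (space N) = integral\<^sup>L M (\<lambda>\<omega>. Y \<omega> * indicator (space M) \<omega>)" using nuI by simp
    also have "\<dots> = integral\<^sup>L M Y"
      by (rule Bochner_Integration.integral_cong[OF refl]) (auto simp: indicator_def)
    finally show ?thesis using big by simp
  qed
  have XXm: "Z \<in> borel_measurable M" if "Z \<in> XX" for Z
    using adm that by (auto simp: admissible_space_def)
  have cst: "(\<lambda>_. c) \<in> XX" for c using adm by (auto simp: admissible_space_def)
  have addXX: "(\<lambda>\<omega>. A \<omega> + B \<omega>) \<in> XX" "(\<lambda>\<omega>. A \<omega> - B \<omega>) \<in> XX" if "A \<in> XX" "B \<in> XX" for A B
    using adm that by (auto simp: admissible_space_def)
  have indXX: "(\<lambda>\<omega>. indicator S \<omega> * A \<omega>) \<in> XX" if "A \<in> XX" "S \<in> sets M" for A S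
    using adm that by (auto simp: admissible_space_def)
  define \<rho> where "\<rho> = (\<lambda>i Z. SUP Q\<in>Pset M Y. LVaR (L i) Q Z)"
  define nuZ where "nuZ (Z::'a \<Rightarrow> real) (x::real) = measure N {\<omega>\<in>space M. Z \<omega> > x}" for Z x
  have rhoeq: "\<rho> i Z = Inf (ereal ` {x. nuZ Z x \<le> L i x})" if i: "i \<in> {1..n}" and Zm: "Z \<in> borel_measurable M" for i Z
  proof -
    have "\<rho> i Z = Inf (ereal ` {x. integral\<^sup>L M (\<lambda>\<omega>. Y \<omega> * indicator {\<omega>\<in>space M. Z \<omega> > x} \<omega>) \<le> L i x})"
      unfolding \<rho>_def using LH i by (intro sup_LVaR[OF PM Ym Y0 Yi big _ Zm]) auto
    also have "{x. integral\<^sup>L M (\<lambda>\<omega>. Y \<omega> * indicator {\<omega>\<in>space M. Z \<omega> > x} \<omega>) \<le> L i x} = {x. nuZ Z x \<le> L i x}"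
    proof -
      have "nuZ Z x = integral\<^sup>L M (\<lambda>\<omega>. Y \<omega> * indicator {\<omega>\<in>space M. Z \<omega> > x} \<omega>)" for x
        unfolding nuZ_def using Zm by (intro nuI) measurable
      then show ?thesis by simp
    qed
    finally show ?thesis .
  qed
  have rfin: "\<exists>r. \<rho> i Z = ereal r \<and> (\<forall>x. r < x \<longrightarrow> nuZ Z x \<le> L i x)"
    if i: "i \<in> {1..n}" and Zm: "Z \<in> borel_measurable M" for i Z
  proof -
    have ZN: "Z \<in> borel_measurable N" using Zm by (simp add: N_def)
    show ?thesis using R_finite[OF fN _ ZN bigN, of "L i"] LH i rhoeq[OF i Zm]
      by (simp add: nuZ_def)
  qed
  define T where "T y = Inf (ereal ` {x. nuZ X x \<le> Lambda_y n L y x})" for y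
  have Xm[measurable]: "X \<in> borel_measurable M" using XXm XXX .
  have RHS: "(INF y\<in>(UNIV :: (nat \<Rightarrow> real) set).
            Inf (ereal ` {x. integral\<^sup>L M (\<lambda>\<omega>. Y \<omega> * indicator {\<omega>\<in>space M. X \<omega> > x} \<omega>)
                               \<le> Lambda_y n L y x})) = (INF y\<in>UNIV. T y)"
  proof -
    have "nuZ X x = integral\<^sup>L M (\<lambda>\<omega>. Y \<omega> * indicator {\<omega>\<in>space M. X \<omega> > x} \<omega>)" for x
      unfolding nuZ_def by (intro nuI) measurable
    then show ?thesis by (simp add: T_def)
  qed
  define SS where "SS = {(\<Sum>i=1..n. \<rho> i (Xs i)) | Xs.
      (\<forall>i\<in>{1..n}. Xs i \<in> XX) \<and> (\<forall>\<omega>\<in>space M. (\<Sum>i=1..n. Xs i \<omega>) = X \<omega>)}"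
  have LHS: "infconv M XX n (\<lambda>i Z. SUP Q\<in>Pset M Y. LVaR (L i) Q Z) X = Inf SS"
    unfolding infconv_def SS_def \<rho>_def by simp
  have A: "(INF y\<in>UNIV. T y) \<le> Inf SS"
  proof (rule Inf_greatest)
    fix s assume "s \<in> SS"
    then obtain Xs where Xs: "\<forall>i\<in>{1..n}. Xs i \<in> XX" "\<forall>\<omega>\<in>space M. (\<Sum>i=1..n. Xs i \<omega>) = X \<omega>"
      and s: "s = (\<Sum>i=1..n. \<rho> i (Xs i))" unfolding SS_def by blast
    have "\<forall>i\<in>{1..n}. \<exists>r. \<rho> i (Xs i) = ereal r \<and> (\<forall>x. r < x \<longrightarrow> nuZ (Xs i) x \<le> L i x)"
      using rfin Xs(1) XXm by blast
    then obtain r where r: "\<forall>i\<in>{1..n}. \<rho> i (Xs i) = ereal (r i) \<and> (\<forall>x. r i < x \<longrightarrow> nuZ (Xs i) x \<le> L i x)"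
      by (metis (no_types))
    have s2: "s = ereal (\<Sum>i=1..n. r i)"
    proof -
      have "s = (\<Sum>i=1..n. ereal (r i))" unfolding s using r by (intro sum.cong) auto
      then show ?thesis by simp
    qed
    show "(INF y\<in>UNIV. T y) \<le> s"
      unfolding s2
    proof (rule ereal_le_epsilon2)
      fix e :: real assume e: "0 < e"
      define \<delta> where "\<delta> = e / real n"
      have \<delta>: "0 < \<delta>" using e n1 by (simp add: \<delta>_def)
      define xx where "xx i = r i + \<delta>" for i
      define yy where "yy = (\<lambda>k. \<Sum>i=1..k. xx i)"
      have sx: "(\<Sum>i=1..n. xx i) = (\<Sum>i=1..n. r i) + e"
        using n1 by (simp add: xx_def sum.distrib \<delta>_def)
      have K1: "Lambda_y n L yy (\<Sum>i=1..n. xx i) = (\<Sum>i=1..n. L i (xx i))"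
        unfolding yy_def by (rule Lambda_y_sum[OF n1])
      have sub: "{\<omega>\<in>space M. X \<omega> > (\<Sum>i=1..n. xx i)} \<subseteq> (\<Union>i\<in>{1..n}. {\<omega>\<in>space M. Xs i \<omega> > xx i})"
      proof
        fix \<omega> assume w: "\<omega> \<in> {\<omega>\<in>space M. X \<omega> > (\<Sum>i=1..n. xx i)}"
        show "\<omega> \<in> (\<Union>i\<in>{1..n}. {\<omega>\<in>space M. Xs i \<omega> > xx i})"
        proof (rule ccontr)
          assume "\<omega> \<notin> (\<Union>i\<in>{1..n}. {\<omega>\<in>space M. Xs i \<omega> > xx i})"
          then have "\<forall>i\<in>{1..n}. Xs i \<omega> \<le> xx i" using w by (auto simp: not_less)
          then have "(\<Sum>i=1..n. Xs i \<omega>) \<le> (\<Sum>i=1..n. xx i)" by (intro sum_mono) auto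
          then show False using w Xs(2) by auto
        qed
      qed
      have Xsm: "\<And>i. i \<in> {1..n} \<Longrightarrow> Xs i \<in> borel_measurable M" using Xs(1) XXm by blast
      have meas: "\<And>i. i \<in> {1..n} \<Longrightarrow> {\<omega>\<in>space M. Xs i \<omega> > xx i} \<in> sets M"
        using Xsm by measurable
      have "nuZ X (\<Sum>i=1..n. xx i) \<le> measure N (\<Union>i\<in>{1..n}. {\<omega>\<in>space M. Xs i \<omega> > xx i})"
        unfolding nuZ_def using sub meas
        by (intro finite_measure.finite_measure_mono[OF fN]) auto
      also have "\<dots> \<le> (\<Sum>i=1..n. nuZ (Xs i) (xx i))"
        unfolding nuZ_def using meas by (intro measure_UNION_le) auto
      also have "\<dots> \<le> (\<Sum>i=1..n. L i (xx i))"
        using r \<delta> by (intro sum_mono) (auto simp: xx_def)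
      finally have mem: "nuZ X (\<Sum>i=1..n. xx i) \<le> Lambda_y n L yy (\<Sum>i=1..n. xx i)" using K1 by simp
      have "(INF y\<in>UNIV. T y) \<le> T yy" by (rule INF_lower) simp
      also have "\<dots> \<le> ereal (\<Sum>i=1..n. xx i)" unfolding T_def using mem by (intro Inf_lower) auto
      also have "\<dots> = ereal (\<Sum>i=1..n. r i) + ereal e" using sx by simp
      finally show "(INF y\<in>UNIV. T y) \<le> ereal (\<Sum>i=1..n. r i) + ereal e" .
    qed
  qed
  have B: "Inf SS \<le> (INF y\<in>UNIV. T y)"
  proof (rule INF_greatest)
    fix y :: "nat \<Rightarrow> real"
    show "Inf SS \<le> T y" unfolding T_def
    proof (rule Inf_greatest)
      fix z assume "z \<in> ereal ` {x. nuZ X x \<le> Lambda_y n L y x}"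
      then obtain x where z: "z = ereal x" and hx: "nuZ X x \<le> Lambda_y n L y x" by auto
      define y' where "y' = (\<lambda>i. if i = 0 then 0 else y i)"
      define xx where "xx = (\<lambda>i. if i < n then y' i - y' (i - 1) else x - y' (n - 1))"
      have K3a: "(\<Sum>i=1..n. xx i) = x" and K3b: "(\<Sum>i=1..n. L i (xx i)) = Lambda_y n L y x"
        using Lambda_y_split[OF n1, where y=y and x=x] unfolding xx_def y'_def by auto
      define Bs where "Bs = {\<omega>\<in>space M. X \<omega> > x}"
      have Bsm: "Bs \<in> sets N" unfolding Bs_def by simp measurable
      have c0: "\<forall>i\<in>{1..n}. 0 \<le> L i (xx i)" using LH by (auto simp: H_I_def less_imp_le)
      have mB: "measure N Bs \<le> (\<Sum>i=1..n. L i (xx i))" using hx K3b by (simp add: nuZ_def Bs_def)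
      obtain P where P: "\<forall>i\<in>{1..n}. P i \<in> sets N \<and> measure N (P i \<inter> Bs) \<le> L i (xx i)"
          "\<forall>i\<in>{1..n}. \<forall>j\<in>{1..n}. i \<noteq> j \<longrightarrow> P i \<inter> P j = {}"
          "(\<Union>i\<in>{1..n}. P i) = space N"
        using partition_exists[OF fN aN n1 Bsm c0 mB] by blast
      define Xs where "Xs i = (\<lambda>\<omega>. xx i + indicator (P i) \<omega> * (X \<omega> - x))" for i
      have XsXX: "\<forall>i\<in>{1..n}. Xs i \<in> XX"
      proof
        fix i assume i: "i \<in> {1..n}"
        have "(\<lambda>\<omega>. X \<omega> - x) \<in> XX" using addXX(2)[OF XXX cst[of x]] .
        then have "(\<lambda>\<omega>. indicator (P i) \<omega> * (X \<omega> - x)) \<in> XX" using indXX P(1) i by auto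
        then show "Xs i \<in> XX" unfolding Xs_def using addXX(1)[OF cst[of "xx i"]] by auto
      qed
      have Xsum: "\<forall>\<omega>\<in>space M. (\<Sum>i=1..n. Xs i \<omega>) = X \<omega>"
      proof
        fix \<omega> assume w: "\<omega> \<in> space M"
        have ind: "(\<Sum>i=1..n. indicator (P i) \<omega> :: real) = 1"
        proof (rule indicator_partition_sum[OF _ P(2)])
          show "\<omega> \<in> (\<Union>i\<in>{1..n}. P i)" using P(3) w by simp
        qed simp
        have "(\<Sum>i=1..n. Xs i \<omega>) = (\<Sum>i=1..n. xx i) + (\<Sum>i=1..n. indicator (P i) \<omega>) * (X \<omega> - x)"
          unfolding Xs_def by (simp add: sum.distrib sum_distrib_right)
        also have "\<dots> = X \<omega>" using K3a ind by simp
        finally show "(\<Sum>i=1..n. Xs i \<omega>) = X \<omega>" .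
      qed
      have rle: "\<rho> i (Xs i) \<le> ereal (xx i)" if i: "i \<in> {1..n}" for i
      proof -
        have Xsm: "Xs i \<in> borel_measurable M" using XsXX XXm i by blast
        have Pi: "P i \<subseteq> space M" using P(1) i sets.sets_into_space by fastforce
        have "{\<omega>\<in>space M. Xs i \<omega> > xx i} = P i \<inter> Bs"
          using Pi by (auto simp: Xs_def Bs_def indicator_def)
        then have "nuZ (Xs i) (xx i) \<le> L i (xx i)" using P(1) i by (simp add: nuZ_def)
        then show ?thesis unfolding rhoeq[OF i Xsm] by (intro Inf_lower) auto
      qed
      have "(\<Sum>i=1..n. \<rho> i (Xs i)) \<in> SS" unfolding SS_def using XsXX Xsum by blast
      then have "Inf SS \<le> (\<Sum>i=1..n. \<rho> i (Xs i))" by (rule Inf_lower)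
      also have "\<dots> \<le> (\<Sum>i=1..n. ereal (xx i))" using rle by (intro sum_mono) auto
      also have "\<dots> = ereal x" using K3a by simp
      finally show "Inf SS \<le> z" using z by simp
    qed
  qed
  show ?thesis unfolding LHS RHS by (rule antisym[OF B A])
qed

end
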